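(* Let $N\ge2$. The matrix $D^\ddagger$ is invertible, and its inverse $E=(D^\ddagger)^{-1}$ is given by $$E_{ij}=\omega_NM_j(1)+\int_1^{\tau_i}M_j(\tau)\,d\tau\quad(1\le i<N,\ 1\le j<N),$$ $$E_{iN}=-\omega_N\quad(1\le i\le N),\qquad E_{Nj}=\omega_NM_j(1)\quad(1\le j<N),$$ where $M_j(\tau)=\prod_{i=1,i\ne j}^{N-1}\frac{\tau-\tau_i}{\tau_j-\tau_i}$, $1\le j\le N-1$, is the Lagrange basis for the points $\tau_1,\dots,\tau_{N-1}$.
   Context: Let $-1<\tau_1<\dots<\tau_N=1$ and $\omega_1,\dots,\omega_N>0$ be the nodes and weights of the $N$-point Gauss–Radau quadrature rule on $[-1,1]$ with fixed node $+1$ (exact for polynomials of degree $\le 2N-2$). Set $\tau_0=-1$. For $0\le j\le N$ let $L_j(\tau)=\prod_{i=0,i\ne j}^{N}\frac{\tau-\tau_i}{\tau_j-\tau_i}$ and let $D$ be the $N\times(N+1)$ matrix $D_{ij}=L_j'(\tau_i)$, $1\le i\le N$, $0\le j\le N$. Let $D^\ddagger$ be the $N\times N$ matrix $D^\ddagger_{ij}=-(\omega_j/\omega_i)D_{ji}$, $1\le i,j\le N$. *)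

theory Defs
  imports "HOL-Analysis.Analysis" "HOL-Computational_Algebra.Polynomial" "Jordan_Normal_Form.Matrix"
begin

definition lagrange_basis :: "(nat \<Rightarrow> real) \<Rightarrow> nat set \<Rightarrow> nat \<Rightarrow> real \<Rightarrow> real" where
  "lagrange_basis x I j t = (\<Prod>i\<in>I - {j}. (t - x i) / (x j - x i))"

definition gauss_radau :: "nat \<Rightarrow> (nat \<Rightarrow> real) \<Rightarrow> (nat \<Rightarrow> real) \<Rightarrow> bool" where
  "gauss_radau N \<tau> \<omega> \<longleftrightarrow>
     -1 < \<tau> 1 \<and> (\<forall>i j. 1 \<le> i \<longrightarrow> i < j \<longrightarrow> j \<le> N \<longrightarrow> \<tau> i < \<tau> j) \<and> \<tau> N = 1 \<and>
     (\<forall>i. 1 \<le> i \<longrightarrow> i \<le> N \<longrightarrow> 0 < \<omega> i) \<and>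
     (\<forall>p :: real poly. degree p \<le> 2 * N - 2 \<longrightarrow>
        integral {-1..1} (\<lambda>t. poly p t) = (\<Sum>i = 1..N. \<omega> i * poly p (\<tau> i)))"

definition ext_nodes :: "(nat \<Rightarrow> real) \<Rightarrow> nat \<Rightarrow> real" where
  "ext_nodes \<tau> j = (if j = 0 then -1 else \<tau> j)"

definition diff_mat :: "nat \<Rightarrow> (nat \<Rightarrow> real) \<Rightarrow> nat \<Rightarrow> nat \<Rightarrow> real" where
  "diff_mat N \<tau> i j = deriv (lagrange_basis (ext_nodes \<tau>) {0..N} j) (ext_nodes \<tau> i)"

text \<open>D-double-dagger as an N x N matrix (0-based: entry (i,j) is the paper's (i+1,j+1)).\<close>
definition ddag_mat :: "nat \<Rightarrow> (nat \<Rightarrow> real) \<Rightarrow> (nat \<Rightarrow> real) \<Rightarrow> real mat" where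
  "ddag_mat N \<tau> \<omega> = mat N N (\<lambda>(i, j). - (\<omega> (j+1) / \<omega> (i+1)) * diff_mat N \<tau> (j+1) (i+1))"

definition M_basis :: "nat \<Rightarrow> (nat \<Rightarrow> real) \<Rightarrow> nat \<Rightarrow> real \<Rightarrow> real" where
  "M_basis N \<tau> j = lagrange_basis \<tau> {1..N-1} j"

text \<open>Claimed inverse E (0-based). The integral from 1 to tau_i (tau_i <= 1) is
  written as minus the integral over [tau_i, 1].\<close>
definition E_mat :: "nat \<Rightarrow> (nat \<Rightarrow> real) \<Rightarrow> (nat \<Rightarrow> real) \<Rightarrow> real mat" where
  "E_mat N \<tau> \<omega> = mat N N (\<lambda>(i, j).
     if j = N - 1 then - \<omega> N
     else if i = N - 1 then \<omega> N * M_basis N \<tau> (j+1) 1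
     else \<omega> N * M_basis N \<tau> (j+1) 1 - integral {\<tau> (i+1)..1} (M_basis N \<tau> (j+1)))"

end

theory Submission
  imports Defs "Jordan_Normal_Form.Determinant"
begin

definition lpoly :: "(nat \<Rightarrow> real) \<Rightarrow> nat set \<Rightarrow> nat \<Rightarrow> real poly" where
  "lpoly x I j = (\<Prod>i\<in>I - {j}. Polynomial.smult (inverse (x j - x i)) [:- x i, 1:])"

lemma poly_lpoly: "poly (lpoly x I j) t = lagrange_basis x I j t"
  unfolding lpoly_def lagrange_basis_def poly_prod
  by (rule prod.cong) (auto simp: divide_inverse algebra_simps)

lemma lagrange_fun: "lagrange_basis x I j = (\<lambda>t. poly (lpoly x I j) t)"
  by (simp add: poly_lpoly)

lemma degree_lpoly: "finite I \<Longrightarrow> degree (lpoly x I j) \<le> card (I - {j})"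
proof -
  assume "finite I"
  have "degree (lpoly x I j) \<le> sum (degree \<circ> (\<lambda>i. Polynomial.smult (inverse (x j - x i)) [:- x i, 1:])) (I - {j})"
    unfolding lpoly_def by (rule degree_prod_sum_le) (use \<open>finite I\<close> in auto)
  also have "\<dots> \<le> sum (\<lambda>_. 1) (I - {j})"
    by (rule sum_mono) auto
  finally show ?thesis by simp
qed

lemma lagrange_self: "(\<And>i. i \<in> I \<Longrightarrow> i \<noteq> j \<Longrightarrow> x i \<noteq> x j) \<Longrightarrow> lagrange_basis x I j (x j) = 1"
  unfolding lagrange_basis_def by (rule prod.neutral) force

lemma lagrange_other: "finite I \<Longrightarrow> k \<in> I \<Longrightarrow> k \<noteq> j \<Longrightarrow> lagrange_basis x I j (x k) = 0"
  unfolding lagrange_basis_def by (rule prod_zero) auto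

lemma deriv_lagrange: "deriv (lagrange_basis x I j) t = poly (pderiv (lpoly x I j)) t"
  unfolding lagrange_fun by (rule DERIV_imp_deriv) simp

lemma ftc_poly: "(a::real) \<le> b \<Longrightarrow> integral {a..b} (\<lambda>t. poly (pderiv q) t) = poly q b - poly q a"
  apply (rule integral_unique)
  apply (rule fundamental_theorem_of_calculus)
   apply simp
  apply (simp add: has_real_derivative_iff_has_vector_derivative[symmetric])
  by (metis DERIV_subset poly_DERIV top_greatest)

lemma antideriv: "\<exists>V::real poly. pderiv V = p"
proof -
  have "pderiv (\<Sum>i\<le>degree p. monom (coeff p i / of_nat (Suc i)) (Suc i)) = (\<Sum>i\<le>degree p. monom (coeff p i) i)"
    by (simp add: higher_pderiv_sum[where n=1, simplified] pderiv_monom)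
  thus ?thesis by (metis poly_as_sum_of_monoms)
qed

lemma reidx: "(\<Sum>c<N. f (Suc c)) = (\<Sum>k=1..N. (f::nat\<Rightarrow>real) k)"
  by (induct N) (auto simp: sum.atLeast_Suc_atMost)

theorem proposition9p1:
  fixes N :: nat and \<tau> \<omega> :: "nat \<Rightarrow> real"
  assumes "N \<ge> 2" and "gauss_radau N \<tau> \<omega>"
  shows "invertible_mat (ddag_mat N \<tau> \<omega>) \<and> inverts_mat (ddag_mat N \<tau> \<omega>) (E_mat N \<tau> \<omega>) \<and> inverts_mat (E_mat N \<tau> \<omega>) (ddag_mat N \<tau> \<omega>)"
proof -
  note gr = assms(2)[unfolded gauss_radau_def]
  have inc: "\<And>i j. 1 \<le> i \<Longrightarrow> i < j \<Longrightarrow> j \<le> N \<Longrightarrow> \<tau> i < \<tau> j" using gr by blast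
  have tN: "\<tau> N = 1" using gr by blast
  have t1: "-1 < \<tau> 1" using gr by blast
  have wpos: "\<And>i. 1 \<le> i \<Longrightarrow> i \<le> N \<Longrightarrow> 0 < \<omega> i" using gr by blast
  have exact: "\<And>p::real poly. degree p \<le> 2 * N - 2 \<Longrightarrow>
        integral {-1..1} (\<lambda>t. poly p t) = (\<Sum>i = 1..N. \<omega> i * poly p (\<tau> i))" using gr by blast
  have tle: "\<tau> i \<le> 1" if "1 \<le> i" "i \<le> N" for i
    using inc[of i N] that tN by (cases "i = N") auto
  have tgt: "-1 < \<tau> i" if "1 \<le> i" "i \<le> N" for i
    using inc[of 1 i] that t1 by (cases "i = 1") auto
  have tinj: "\<tau> i \<noteq> \<tau> j" if "1 \<le> i" "i \<le> N" "1 \<le> j" "j \<le> N" "i \<noteq> j" for i j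
    using inc[of i j] inc[of j i] that by (cases "i < j") auto
  define T where "T = ext_nodes \<tau>"
  have Tinj: "T i \<noteq> T j" if "i \<le> N" "j \<le> N" "i \<noteq> j" for i j
    using that tinj[of i j] tgt[of i] tgt[of j] unfolding T_def ext_nodes_def by (auto split: if_splits)
  define L where "L i = lpoly T {0..N} i" for i
  have degL: "degree (L i) \<le> N" if "i \<le> N" for i
    using degree_lpoly[of "{0..N}" T i] that unfolding L_def by simp
  have Lnode: "poly (L i) (\<tau> k) = (if k = i then 1 else 0)" if "1 \<le> i" "i \<le> N" "1 \<le> k" "k \<le> N" for i k
  proof -
    have "\<tau> k = T k" using that unfolding T_def ext_nodes_def by simp
    thus ?thesis unfolding L_def poly_lpoly
      using lagrange_self[of "{0..N}" i T] lagrange_other[of "{0..N}" k i T] that Tinj by auto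
  qed
  have Lm1: "poly (L i) (-1) = 0" if "1 \<le> i" "i \<le> N" for i
  proof -
    have "-1 = T 0" unfolding T_def ext_nodes_def by simp
    thus ?thesis unfolding L_def poly_lpoly
      using lagrange_other[of "{0..N}" 0 i T] that by simp
  qed
  have key: "(\<Sum>k=1..N. \<omega> k * poly (pderiv (L i)) (\<tau> k) * poly W (\<tau> k))
      = (if i = N then poly W 1 else 0) - \<omega> i * poly (pderiv W) (\<tau> i)"
    if "1 \<le> i" "i \<le> N" "degree W \<le> N - 1" for i W
  proof -
    define q where "q = L i * W"
    have "degree q \<le> N + (N - 1)" unfolding q_def
      using degree_mult_le[of "L i" W] degL[of i] that by linarith
    hence dq: "degree (pderiv q) \<le> 2 * N - 2" unfolding degree_pderiv using assms(1) by linarith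
    have "integral {-1..1} (\<lambda>t. poly (pderiv q) t) = poly q 1 - poly q (-1)"
      by (rule ftc_poly) simp
    also have "\<dots> = (if i = N then poly W 1 else 0)"
      unfolding q_def using Lnode[of i N] Lm1[of i] that tN by simp
    finally have I1: "integral {-1..1} (\<lambda>t. poly (pderiv q) t) = (if i = N then poly W 1 else 0)" .
    have "integral {-1..1} (\<lambda>t. poly (pderiv q) t) = (\<Sum>k=1..N. \<omega> k * poly (pderiv q) (\<tau> k))"
      by (rule exact[OF dq])
    also have "\<dots> = (\<Sum>k=1..N. \<omega> k * (if k = i then 1 else 0) * poly (pderiv W) (\<tau> k))
         + (\<Sum>k=1..N. \<omega> k * poly (pderiv (L i)) (\<tau> k) * poly W (\<tau> k))"
      unfolding sum.distrib[symmetric] q_def pderiv_mult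
      by (rule sum.cong) (use Lnode[of i] that in \<open>auto simp: algebra_simps\<close>)
    also have "(\<Sum>k=1..N. \<omega> k * (if k = i then 1 else 0) * poly (pderiv W) (\<tau> k)) = \<omega> i * poly (pderiv W) (\<tau> i)"
      using that by (simp add: if_distrib if_distribR cong: if_cong)
    finally show ?thesis using I1 by linarith
  qed
  define D where "D = ddag_mat N \<tau> \<omega>"
  define E where "E = E_mat N \<tau> \<omega>"
  have Dc: "D \<in> carrier_mat N N" and Ec: "E \<in> carrier_mat N N"
    unfolding D_def E_def ddag_mat_def E_mat_def by auto
  have Dent: "D $$ (a, c) = - (\<omega> (Suc c) / \<omega> (Suc a)) * poly (pderiv (L (Suc a))) (\<tau> (Suc c))"
    if "a < N" "c < N" for a c
    using that unfolding D_def ddag_mat_def diff_mat_def deriv_lagrange L_def T_def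
    by (simp add: ext_nodes_def)
  have gen: "(\<Sum>c<N. D $$ (a, c) * poly W (\<tau> (Suc c)))
        = poly (pderiv W) (\<tau> (Suc a)) - (if Suc a = N then poly W 1 / \<omega> (Suc a) else 0)"
    if "a < N" "degree W \<le> N - 1" for a W
  proof -
    have wa: "\<omega> (Suc a) > 0" using wpos[of "Suc a"] that by simp
    have "(\<Sum>c<N. D $$ (a, c) * poly W (\<tau> (Suc c)))
        = (\<Sum>c<N. - (1 / \<omega> (Suc a)) * (\<omega> (Suc c) * poly (pderiv (L (Suc a))) (\<tau> (Suc c)) * poly W (\<tau> (Suc c))))"
      by (rule sum.cong) (use Dent that in auto)
    also have "\<dots> = - (1 / \<omega> (Suc a)) * (\<Sum>k=1..N. \<omega> k * poly (pderiv (L (Suc a))) (\<tau> k) * poly W (\<tau> k))"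
      unfolding sum_distrib_left[symmetric]
      using reidx[of "\<lambda>k. \<omega> k * poly (pderiv (L (Suc a))) (\<tau> k) * poly W (\<tau> k)" N] by simp
    also have "\<dots> = - (1 / \<omega> (Suc a)) * ((if Suc a = N then poly W 1 else 0) - \<omega> (Suc a) * poly (pderiv W) (\<tau> (Suc a)))"
      using key[of "Suc a" W] that by simp
    also have "\<dots> = poly (pderiv W) (\<tau> (Suc a)) - (if Suc a = N then poly W 1 / \<omega> (Suc a) else 0)"
      using wa by (cases "Suc a = N") (auto simp: field_simps)
    finally show ?thesis .
  qed
  have prodE: "(D * E) $$ (a, b) = (\<Sum>c<N. D $$ (a, c) * E $$ (c, b))" if "a < N" "b < N" for a b
    using that Dc Ec by (simp add: scalar_prod_def lessThan_atLeast0)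
  have DE: "D * E = 1\<^sub>m N"
  proof (rule eq_matI)
    fix a b assume ab: "a < dim_row (1\<^sub>m N :: real mat)" "b < dim_col (1\<^sub>m N :: real mat)"
    hence a: "a < N" and b: "b < N" by auto
    have "(D * E) $$ (a, b) = (if a = b then 1 else 0)"
    proof (cases "b = N - 1")
      case True
      have "(D * E) $$ (a, b) = (\<Sum>c<N. D $$ (a, c) * poly [:- \<omega> N:] (\<tau> (Suc c)))"
        unfolding prodE[OF a b] by (rule sum.cong) (use True in \<open>auto simp: E_def E_mat_def\<close>)
      also have "\<dots> = (if a = b then 1 else 0)"
      proof -
        have g: "(\<Sum>c<N. D $$ (a, c) * poly [:- \<omega> N:] (\<tau> (Suc c)))
          = poly (pderiv [:- \<omega> N:]) (\<tau> (Suc a)) - (if Suc a = N then poly [:- \<omega> N:] 1 / \<omega> (Suc a) else 0)"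
          by (rule gen[OF a]) simp
        show ?thesis unfolding g using True a wpos[of N] assms(1) by auto
      qed
      finally show ?thesis .
    next
      case False
      hence bN: "b < N - 1" using b by simp
      define j where "j = Suc b"
      define Mp where "Mp = lpoly \<tau> {1..N-1} j"
      obtain V where V: "pderiv V = Mp" using antideriv by blast
      define W where "W = V + [:\<omega> N * poly Mp 1 - poly V 1:]"
      have "degree Mp \<le> N - 2"
        using degree_lpoly[of "{1..N-1}" \<tau> j] bN unfolding Mp_def j_def by simp
      hence "degree V \<le> N - 1" using V degree_pderiv[of V] assms(1) by simp
      hence dW: "degree W \<le> N - 1" unfolding W_def
        using degree_add_le[of V "N - 1" "[:\<omega> N * poly Mp 1 - poly V 1:]"] by simp
      have pW: "pderiv W = Mp" unfolding W_def pderiv_add V by (simp add: pderiv_pCons)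
      have W1: "poly W 1 = \<omega> N * poly Mp 1" unfolding W_def by simp
      have Mfun: "M_basis N \<tau> j = (\<lambda>t. poly (pderiv V) t)"
        unfolding M_basis_def V Mp_def lagrange_fun ..
      have Eent: "E $$ (c, b) = poly W (\<tau> (Suc c))" if "c < N" for c
      proof (cases "c = N - 1")
        case True
        hence "\<tau> (Suc c) = 1" using tN assms(1) by (simp add: Suc_diff_1)
        then show ?thesis using True that bN unfolding E_def E_mat_def W_def M_basis_def Mp_def j_def
          by (simp add: lagrange_fun)
      next
        case False
        have "integral {\<tau> (Suc c)..1} (M_basis N \<tau> j) = poly V 1 - poly V (\<tau> (Suc c))"
          unfolding Mfun by (rule ftc_poly) (use tle[of "Suc c"] that in auto)
        then show ?thesis using False that bN unfolding E_def E_mat_def W_def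
          by (simp add: j_def M_basis_def Mp_def lagrange_fun)
      qed
      have "(D * E) $$ (a, b) = (\<Sum>c<N. D $$ (a, c) * poly W (\<tau> (Suc c)))"
        unfolding prodE[OF a b] by (rule sum.cong) (use Eent in auto)
      also have "\<dots> = poly Mp (\<tau> (Suc a)) - (if Suc a = N then \<omega> N * poly Mp 1 / \<omega> (Suc a) else 0)"
        unfolding gen[OF a dW] pW W1 ..
      also have "\<dots> = (if a = b then 1 else 0)"
      proof (cases "Suc a = N")
        case True
        thus ?thesis using tN wpos[of N] assms(1) bN by auto
      next
        case False
        hence "Suc a \<in> {1..N-1}" "j \<in> {1..N-1}" using a bN unfolding j_def by auto
        moreover have "\<tau> i \<noteq> \<tau> j" if "i \<in> {1..N-1}" "i \<noteq> j" for i
          using tinj[of i j] that \<open>j \<in> {1..N-1}\<close> by force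
        ultimately show ?thesis using False unfolding Mp_def poly_lpoly j_def
          using lagrange_self[of "{1..N-1}" "Suc b" \<tau>] lagrange_other[of "{1..N-1}" "Suc a" "Suc b" \<tau>]
          by auto
      qed
      finally show ?thesis .
    qed
    thus "(D * E) $$ (a, b) = 1\<^sub>m N $$ (a, b)" using a b by simp
  qed (use Dc Ec in auto)
  have ED: "E * D = 1\<^sub>m N" by (rule mat_mult_left_right_inverse[OF Dc Ec DE])
  have "inverts_mat D E" "inverts_mat E D" unfolding inverts_mat_def using DE ED Dc Ec by auto
  moreover have "square_mat D" using Dc by auto
  ultimately show ?thesis unfolding invertible_mat_def D_def E_def by blast
qed

end
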